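(* Let $n\in\mathbb{N}$ and consider the equation $q_nx^n+\cdots+q_1x+q_0=0$ in the unknown $x\in\mathbb{H}$, with $q_n\neq 0$. (a) Suppose all $q_i$ are real, and the solution set of the equation in $\mathbb{C}$ is $\{\xi_1,\ldots,\xi_s,\zeta_1,\overline{\zeta_1},\ldots,\zeta_t,\overline{\zeta_t}\}$, where $\xi_1,\ldots,\xi_s$ are distinct real numbers and $\zeta_1,\ldots,\zeta_t$ are distinct nonreal complex numbers. Then the solution set in $\mathbb{H}$ is $\{\xi_1,\ldots,\xi_s\}\cup[\zeta_1]\cup\cdots\cup[\zeta_t]$. (b) More generally, suppose all $q_i$ are complex numbers and the solution set of the equation in $\mathbb{C}$ is $\{\xi_1,\ldots,\xi_s,\eta_1,\ldots,\eta_k,\zeta_1,\overline{\zeta_1},\ldots,\zeta_t,\overline{\zeta_t}\}$, where $\xi_1,\ldots,\xi_s$ are distinct real numbers, $\eta_1,\ldots,\eta_k,\zeta_1,\ldots,\zeta_t$ are distinct nonreal complex numbers, and no $\overline{\eta_i}$ is a root of the equation. Then the solution set in $\mathbb{H}$ is $\{\xi_1,\ldots,\xi_s,\eta_1,\ldots,\eta_k\}\cup[\zeta_1]\cup\cdots\cup[\zeta_t]$. (c) Let $p_1,\ldots,p_n\in\mathbb{H}$ with $p_n\neq0$, $d_0\in\{0,1\}$, and let $f_1,f_2,\bar f_1,\bar f_2$ be the derived polynomials of the equation $p_nx^n+\cdots+p_1x+d_0=0$. Then this equation has only finitely many solutions in $\mathbb{H}$ if and only if the complex polynomial $\gcd(f_1,f_2,\bar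 f_1,\bar f_2)$ has no nonreal complex root, if and only if the complex polynomial $\gcd(f_1,f_2)$ has no pair of nonreal conjugate complex roots (i.e., there is no nonreal $c\in\mathbb{C}$ with $c$ and $\bar c$ both roots of $\gcd(f_1,f_2)$).
   Context: $\mathbb{H}$ denotes the real quaternions with units $\mathbf{i},\mathbf{j},\mathbf{k}$, and $\mathbb{C}=\mathbb{R}\oplus\mathbb{R}\mathbf{i}\subset\mathbb{H}$. For $q\in\mathbb{H}$, $[q]=\{aqa^{-1}:a\in\mathbb{H},a\neq0\}$. Derived polynomials: writing $p_i=t_1^{(i)}+t_2^{(i)}\mathbf{j}$ with $t_1^{(i)},t_2^{(i)}\in\mathbb{C}$, set $f_1(t)=t_1^{(n)}t^n+\cdots+t_1^{(1)}t+d_0$, $f_2(t)=t_2^{(n)}t^n+\cdots+t_2^{(1)}t$, $\bar f_1(t)=\overline{t_1^{(n)}}t^n+\cdots+\overline{t_1^{(1)}}t+d_0$, $\bar f_2(t)=\overline{t_2^{(n)}}t^n+\cdots+\overline{t_2^{(1)}}t$, regarded as polynomials in $\mathbb{C}[t]$. *)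

theory Defs
  imports "HOL-Analysis.Analysis" "HOL-Computational_Algebra.Polynomial_Factorial" "HOL-Computational_Algebra.Field_as_Ring"
begin

text \<open>Real quaternions, represented in Cayley--Dickson form q = z1 + z2 j with z1, z2 complex
  (C = R + R i inside H).  Multiplication: (a + b j)(c + d j) = (a c - b cnj d) + (a d + b cnj c) j.\<close>

datatype quat = Quat (qfst: complex) (qsnd: complex)

lemma quat_eq_iff: "x = y \<longleftrightarrow> qfst x = qfst y \<and> qsnd x = qsnd y"
  by (cases x; cases y) auto

instantiation quat :: division_ring
begin
definition "0 = Quat 0 0"
definition "1 = Quat 1 0"
definition "x + y = Quat (qfst x + qfst y) (qsnd x + qsnd y)"
definition "x - y = Quat (qfst x - qfst y) (qsnd x - qsnd y)"
definition "- x = Quat (- qfst x) (- qsnd x)"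
definition "x * y = Quat (qfst x * qfst y - qsnd x * cnj (qsnd y))
                         (qfst x * qsnd y + qsnd x * cnj (qfst y))"
definition "inverse x = (let r = complex_of_real ((cmod (qfst x))\<^sup>2 + (cmod (qsnd x))\<^sup>2)
                         in Quat (cnj (qfst x) / r) (- qsnd x / r))"
definition "x div (y::quat) = x * inverse y"
instance
proof
  fix a b c :: quat
  show "a * b * c = a * (b * c)"
    by (simp add: times_quat_def algebra_simps)
  show "(a + b) * c = a * c + b * c"
    by (simp add: times_quat_def plus_quat_def algebra_simps)
  show "a * (b + c) = a * b + a * c"
    by (simp add: times_quat_def plus_quat_def algebra_simps)
  show "a + b + c = a + (b + c)" by (simp add: plus_quat_def algebra_simps)
  show "a + b = b + a" by (simp add: plus_quat_def algebra_simps)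
  show "0 + a = a" by (simp add: plus_quat_def zero_quat_def)
  show "- a + a = 0" by (simp add: plus_quat_def zero_quat_def uminus_quat_def)
  show "a - b = a + - b" by (simp add: plus_quat_def minus_quat_def uminus_quat_def)
  show "1 * a = a" by (simp add: times_quat_def one_quat_def)
  show "a * 1 = a" by (simp add: times_quat_def one_quat_def)
  show "(0::quat) \<noteq> 1" by (simp add: zero_quat_def one_quat_def)
  show "a div b = a * inverse b" by (simp add: divide_quat_def)
  show "inverse (0::quat) = 0" by (simp add: inverse_quat_def zero_quat_def)
next
  fix a :: quat
  assume "a \<noteq> 0"
  define A where "A = qfst a"
  define B where "B = qsnd a"
  define r where "r = complex_of_real ((cmod A)\<^sup>2 + (cmod B)\<^sup>2)"
  have nz: "(cmod A)\<^sup>2 + (cmod B)\<^sup>2 \<noteq> 0"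
    using \<open>a \<noteq> 0\<close> unfolding A_def B_def
    by (cases a) (auto simp: zero_quat_def add_nonneg_eq_0_iff)
  then have rnz: "r \<noteq> 0" unfolding r_def of_real_eq_0_iff by blast
  have rr: "A * cnj A + B * cnj B = r"
    unfolding r_def using complex_norm_square[of A] complex_norm_square[of B] by simp
  have cr: "cnj r = r" unfolding r_def by simp
  have inv: "inverse a = Quat (cnj A / r) (- B / r)"
    by (simp add: inverse_quat_def A_def B_def r_def Let_def)
  show "inverse a * a = 1"
  proof -
    have "cnj A / r * A - (- B / r) * cnj B = 1"
      using rr rnz by (simp add: field_simps mult.commute)
    moreover have "cnj A / r * B + (- B / r) * cnj A = 0"
      by (simp add: field_simps mult.commute)
    ultimately show ?thesis
      by (simp add: inv times_quat_def one_quat_def A_def B_def)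
  qed
  show "a * inverse a = 1"
  proof -
    have "A * (cnj A / r) - B * cnj (- B / r) = 1"
      using rr rnz cr by (simp add: field_simps)
    moreover have "A * (- B / r) + B * cnj (cnj A / r) = 0"
      using cr by (simp add: field_simps mult.commute)
    ultimately show ?thesis
      by (simp add: inv times_quat_def one_quat_def A_def B_def)
  qed
qed
end

definition of_cplx :: "complex \<Rightarrow> quat" where
  "of_cplx z = Quat z 0"

definition conjclass :: "quat \<Rightarrow> quat set" where
  "conjclass q = {a * q * inverse a | a. a \<noteq> 0}"

definition qeval :: "complex poly \<Rightarrow> quat \<Rightarrow> quat" where
  "qeval p x = (\<Sum>i\<le>degree p. of_cplx (coeff p i) * x ^ i)"

definition derived_f1 :: "nat \<Rightarrow> (nat \<Rightarrow> quat) \<Rightarrow> real \<Rightarrow> complex poly" where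
  "derived_f1 n p d0 = (\<Sum>i=1..n. monom (qfst (p i)) i) + [:complex_of_real d0:]"
definition derived_f2 :: "nat \<Rightarrow> (nat \<Rightarrow> quat) \<Rightarrow> complex poly" where
  "derived_f2 n p = (\<Sum>i=1..n. monom (qsnd (p i)) i)"
definition derived_f1bar :: "nat \<Rightarrow> (nat \<Rightarrow> quat) \<Rightarrow> real \<Rightarrow> complex poly" where
  "derived_f1bar n p d0 = (\<Sum>i=1..n. monom (cnj (qfst (p i))) i) + [:complex_of_real d0:]"
definition derived_f2bar :: "nat \<Rightarrow> (nat \<Rightarrow> quat) \<Rightarrow> complex poly" where
  "derived_f2bar n p = (\<Sum>i=1..n. monom (cnj (qsnd (p i))) i)"

end

theory Submission
  imports Defs
begin


definition qr :: "real \<Rightarrow> quat" where "qr r = Quat (complex_of_real r) 0"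
definition ci :: quat where "ci = Quat \<i> 0"

lemma Quat_qfst_qsnd[simp]: "Quat (qfst x) (qsnd x) = x" by (cases x) auto
lemma quat_simps[simp]:
  "qfst (x + y) = qfst x + qfst y" "qsnd (x + y) = qsnd x + qsnd y"
  "qfst (x - y) = qfst x - qfst y" "qsnd (x - y) = qsnd x - qsnd y"
  "qfst (- x) = - qfst x" "qsnd (- x) = - qsnd x"
  "qfst (x * y) = qfst x * qfst y - qsnd x * cnj (qsnd y)"
  "qsnd (x * y) = qfst x * qsnd y + qsnd x * cnj (qfst y)"
  "qfst 0 = 0" "qsnd 0 = 0" "qfst 1 = 1" "qsnd 1 = 0"
  by (simp_all add: plus_quat_def minus_quat_def uminus_quat_def times_quat_def zero_quat_def one_quat_def)

lemma qfst_sum: "qfst (sum f S) = (\<Sum>i\<in>S. qfst (f i))"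
  by (induct S rule: infinite_finite_induct) auto
lemma qsnd_sum: "qsnd (sum f S) = (\<Sum>i\<in>S. qsnd (f i))"
  by (induct S rule: infinite_finite_induct) auto

lemma qr_comm: "qr r * y = y * qr r"
  by (simp add: quat_eq_iff qr_def)
lemma qr_mult: "qr a * qr b = qr (a * b)" by (simp add: quat_eq_iff qr_def)
lemma qr_add: "qr a + qr b = qr (a + b)" by (simp add: quat_eq_iff qr_def)
lemma qr_diff: "qr a - qr b = qr (a - b)" by (simp add: quat_eq_iff qr_def)
lemma qr_0[simp]: "qr 0 = 0" by (simp add: quat_eq_iff qr_def)
lemma qr_1: "qr 1 = 1" by (simp add: quat_eq_iff qr_def)
lemma qr_sel[simp]: "qfst (qr r) = of_real r" "qsnd (qr r) = 0" by (simp_all add: qr_def)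
lemma ci_sel[simp]: "qfst ci = \<i>" "qsnd ci = 0" by (simp_all add: ci_def)
lemma ci_sq: "ci * ci = -1" by (simp add: quat_eq_iff)
lemma nci_sq: "(-ci) * (-ci) = -1" by (simp add: quat_eq_iff)

lemma pow_step:
  assumes I: "I * I = -1"
  shows "(qr A + qr B * I) * (qr a + qr b * I) = qr (A*a - B*b) + qr (A*b + B*a) * I"
proof -
  have c1: "I * qr a = qr a * I" "I * qr b = qr b * I" by (simp_all only: qr_comm)
  have "(qr A + qr B * I) * (qr a + qr b * I) =
     qr A * qr a + qr A * qr b * I + qr B * (I * qr a) + qr B * (I * qr b) * I"
    by (simp add: algebra_simps)
  also have "\<dots> = qr A * qr a + qr A * qr b * I + qr B * qr a * I + qr B * qr b * (I * I)"
    by (unfold c1) (simp only: mult.assoc)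
  also have "\<dots> = qr (A*a) + qr (A*b) * I + qr (B*a) * I + - qr (B*b)"
  proof -
    have h4: "qr (B*b) * (I * I) = - qr (B*b)" by (simp only: I mult_minus_right mult_1_right)
    show ?thesis by (simp only: h4 qr_mult)
  qed
  also have "\<dots> = qr (A*a - B*b) + qr (A*b + B*a) * I"
  proof -
    have "qr (A*a - B*b) = qr (A*a) + - qr (B*b)" by (simp add: quat_eq_iff qr_def)
    moreover have "qr (A*b + B*a) * I = qr (A*b) * I + qr (B*a) * I" by (simp only: qr_add[symmetric] distrib_right)
    ultimately show ?thesis by (simp only: add.assoc add.commute add.left_commute)
  qed
  finally show ?thesis .
qed

lemma pow_lemma:
  assumes I: "I * I = -1"
  shows "(qr a + qr b * I) ^ k = qr (Re (Complex a b ^ k)) + qr (Im (Complex a b ^ k)) * I"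
proof (induct k)
  case 0 then show ?case by (simp add: qr_1)
next
  case (Suc k)
  show ?case
    by (simp only: power_Suc2 Suc pow_step[OF I]) (simp add: algebra_simps)
qed

lemma sum_eval:
  assumes I: "I * I = -1"
  shows "(\<Sum>i\<in>S. c i * (qr a + qr b * I) ^ i) =
    (\<Sum>i\<in>S. c i * qr (Re (Complex a b ^ i))) + (\<Sum>i\<in>S. c i * qr (Im (Complex a b ^ i))) * I"
  by (simp add: pow_lemma[OF I] distrib_left sum.distrib sum_distrib_right mult.assoc)

lemma ofc_rep: "of_cplx w = qr (Re w) + qr (Im w) * ci"
  by (simp add: quat_eq_iff of_cplx_def complex_eq_iff)
lemma ofc_rep_cnj: "of_cplx (cnj w) = qr (Re w) + qr (Im w) * (-ci)"
  by (simp add: quat_eq_iff of_cplx_def complex_eq_iff)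



definition qa :: "quat \<Rightarrow> real" where "qa x = Re (qfst x)"
definition qb :: "quat \<Rightarrow> real" where "qb x = sqrt ((Im (qfst x))\<^sup>2 + (cmod (qsnd x))\<^sup>2)"
definition qI :: "quat \<Rightarrow> quat" where
  "qI x = (if qb x > 0 then Quat (\<i> * of_real (Im (qfst x) / qb x)) (qsnd x / of_real (qb x)) else ci)"

lemma inv_cancel[simp]:
  fixes h x :: quat
  shows "h \<noteq> 0 \<Longrightarrow> inverse h * (h * x) = x" "h \<noteq> 0 \<Longrightarrow> h * (inverse h * x) = x"
  by (simp_all add: mult.assoc[symmetric])

lemma unit_sq:
  assumes "a\<^sup>2 + (cmod b)\<^sup>2 = 1"
  shows "Quat (\<i> * of_real a) b * Quat (\<i> * of_real a) b = -1"
proof -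
  have h2: "b * cnj b + complex_of_real a * complex_of_real a = 1"
  proof -
    have e: "b * cnj b = complex_of_real ((cmod b)\<^sup>2)" using complex_norm_square[of b] by simp
    have "complex_of_real (a\<^sup>2) + complex_of_real ((cmod b)\<^sup>2) = 1" using assms by (metis of_real_1 of_real_add)
    then show ?thesis unfolding e[symmetric] by (simp add: power2_eq_square add.commute)
  qed
  show ?thesis
    by (simp add: quat_eq_iff power2_eq_square algebra_simps h2)
qed

lemma qb_nonneg: "qb x \<ge> 0" by (simp add: qb_def)

lemma qI_unit: "\<exists>a b. qI x = Quat (\<i> * of_real a) b \<and> a\<^sup>2 + (cmod b)\<^sup>2 = 1"
proof (cases "qb x > 0")
  case True
  let ?a = "Im (qfst x) / qb x" and ?b = "qsnd x / of_real (qb x)"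
  have "(qb x)\<^sup>2 = (Im (qfst x))\<^sup>2 + (cmod (qsnd x))\<^sup>2" unfolding qb_def
    by (simp add: add_nonneg_nonneg)
  moreover have "(qb x)\<^sup>2 > 0" using True by simp
  moreover have "\<not> (Im (qfst x) = 0 \<and> qsnd x = 0)" using True by (auto simp: qb_def)
  ultimately have "?a\<^sup>2 + (cmod ?b)\<^sup>2 = 1" using True
    by (simp add: power_divide norm_divide add_divide_distrib[symmetric])
  then show ?thesis using True by (intro exI[of _ ?a] exI[of _ ?b]) (simp add: qI_def)
next
  case False
  then show ?thesis by (intro exI[of _ 1] exI[of _ 0]) (simp add: qI_def ci_def)
qed

lemma qI_sq: "qI x * qI x = -1"
  using qI_unit[of x] unit_sq by auto

lemma qrep: "x = qr (qa x) + qr (qb x) * qI x"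
proof (cases "qb x > 0")
  case True
  then show ?thesis
    by (simp add: quat_eq_iff qI_def qa_def complex_eq_iff)
next
  case False
  then have "qb x = 0" using qb_nonneg[of x] by simp
  then have "Im (qfst x) = 0" "qsnd x = 0" unfolding qb_def
    by (simp_all add: add_nonneg_eq_0_iff)
  then show ?thesis using \<open>qb x = 0\<close> by (simp add: quat_eq_iff qa_def complex_eq_iff)
qed

lemma conj_I:
  assumes "a\<^sup>2 + (cmod b)\<^sup>2 = 1"
  shows "\<exists>h. h \<noteq> 0 \<and> Quat (\<i> * of_real a) b * h = h * ci"
proof (cases "Quat (\<i> * of_real a) b + ci = 0")
  case True
  then have "a = -1" "b = 0" by (auto simp: quat_eq_iff complex_eq_iff)
  then show ?thesis
    by (intro exI[of _ "Quat 0 1"]) (auto simp: quat_eq_iff zero_quat_def)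
next
  case False
  let ?I = "Quat (\<i> * of_real a) b"
  have "?I * (?I + ci) = (?I + ci) * ci"
    using unit_sq[OF assms] ci_sq by (simp add: algebra_simps)
  then show ?thesis using False by blast
qed

lemma in_conjclass_I:
  assumes "a\<^sup>2 + (cmod b)\<^sup>2 = 1"
  shows "qr (Re z) + qr (Im z) * Quat (\<i> * of_real a) b \<in> conjclass (of_cplx z)"
proof -
  obtain h where h: "h \<noteq> 0" "Quat (\<i> * of_real a) b * h = h * ci" using conj_I[OF assms] by blast
  have "h * of_cplx z * inverse h = h * (qr (Re z) + qr (Im z) * ci) * inverse h"
    by (simp add: ofc_rep[symmetric])
  also have "\<dots> = qr (Re z) * (h * inverse h) + qr (Im z) * (h * ci * inverse h)"
    by (simp add: algebra_simps qr_comm)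
  also have "h * ci * inverse h = Quat (\<i> * of_real a) b"
    using h by (simp flip: h(2) add: mult.assoc)
  finally show ?thesis using h unfolding conjclass_def by force
qed

lemma conjclass_rep:
  assumes "x \<in> conjclass (of_cplx z)"
  shows "\<exists>I. I * I = -1 \<and> x = qr (Re z) + qr (Im z) * I"
proof -
  obtain h where h: "h \<noteq> 0" "x = h * of_cplx z * inverse h" using assms unfolding conjclass_def by blast
  let ?I = "h * ci * inverse h"
  have "?I * ?I = h * (ci * ci) * inverse h" using h(1) by (simp add: mult.assoc)
  then have "?I * ?I = -1" using h(1) ci_sq by simp
  moreover have "x = qr (Re z) * (h * inverse h) + qr (Im z) * ?I"
    unfolding h(2) ofc_rep[of z] by (simp add: algebra_simps qr_comm)
  ultimately show ?thesis using h(1) by auto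
qed

lemma self_conjclass: "q \<in> conjclass q"
  unfolding conjclass_def by (rule CollectI, rule exI[of _ 1]) simp

lemma conjclass_real: "conjclass (of_cplx (of_real r)) = {of_cplx (of_real r)}"
proof -
  have "h * of_cplx (of_real r) * inverse h = of_cplx (of_real r)" if "h \<noteq> 0" for h
  proof -
    have "of_cplx (of_real r) = qr r" by (simp add: of_cplx_def qr_def)
    then show ?thesis using that by (simp add: qr_comm[symmetric] mult.assoc)
  qed
  then show ?thesis unfolding conjclass_def by (auto intro!: exI[of _ 1])
qed

lemma conjclass_trans: "y \<in> conjclass x \<Longrightarrow> conjclass y \<subseteq> conjclass x"
proof
  fix z assume "y \<in> conjclass x" "z \<in> conjclass y"
  then obtain h g where "h \<noteq> 0" "y = h * x * inverse h" "g \<noteq> 0" "z = g * y * inverse g"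
    unfolding conjclass_def by blast
  then have "z = (g*h) * x * inverse (g*h)" "g * h \<noteq> 0"
    by (simp_all add: mult.assoc nonzero_inverse_mult_distrib)
  then show "z \<in> conjclass x" unfolding conjclass_def by blast
qed

lemma conjclass_sym: "y \<in> conjclass x \<Longrightarrow> x \<in> conjclass y"
proof -
  assume "y \<in> conjclass x"
  then obtain h where "h \<noteq> 0" "y = h * x * inverse h" unfolding conjclass_def by blast
  then have "x = inverse h * y * inverse (inverse h)" "inverse h \<noteq> 0"
    by (simp_all add: mult.assoc)
  then show ?thesis unfolding conjclass_def by blast
qed

lemma cnj_in_conjclass: "of_cplx (cnj z) \<in> conjclass (of_cplx z)"
proof -
  have "Quat 0 1 * of_cplx z = of_cplx (cnj z) * Quat 0 1"
    by (simp add: quat_eq_iff of_cplx_def)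
  moreover have "Quat 0 1 \<noteq> 0" by (simp add: quat_eq_iff)
  ultimately have "of_cplx (cnj z) = Quat 0 1 * of_cplx z * inverse (Quat 0 1)"
    by (simp add: mult.assoc)
  then show ?thesis unfolding conjclass_def using \<open>Quat 0 1 \<noteq> 0\<close> by blast
qed

lemma conjclass_cnj: "conjclass (of_cplx (cnj z)) = conjclass (of_cplx z)"
  using conjclass_trans[OF cnj_in_conjclass[of z]] conjclass_trans[OF conjclass_sym[OF cnj_in_conjclass[of z]]]
  by blast



lemma of_cplx_sel[simp]: "qfst (of_cplx c) = c" "qsnd (of_cplx c) = 0" by (simp_all add: of_cplx_def)
lemma of_cplx_add: "of_cplx a + of_cplx b = of_cplx (a + b)" by (simp add: quat_eq_iff)
lemma of_cplx_mult: "of_cplx a * of_cplx b = of_cplx (a * b)" by (simp add: quat_eq_iff)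
lemma of_cplx_inj: "of_cplx a = of_cplx b \<longleftrightarrow> a = b" by (simp add: quat_eq_iff)
lemma of_cplx_0: "of_cplx 0 = 0" by (simp add: quat_eq_iff)
lemma of_cplx_eq0: "of_cplx a = 0 \<longleftrightarrow> a = 0" by (simp add: quat_eq_iff)
lemma of_cplx_pow: "of_cplx w ^ i = of_cplx (w ^ i)"
  by (induct i) (simp_all add: of_cplx_mult quat_eq_iff)
lemma of_cplx_sum: "(\<Sum>i\<in>S. of_cplx (f i)) = of_cplx (sum f S)"
  by (simp add: quat_eq_iff qfst_sum qsnd_sum)
lemma ofc_qr: "of_cplx c * qr r = of_cplx (c * of_real r)" by (simp add: quat_eq_iff)
lemma ci_ofc: "ci = of_cplx \<i>" by (simp add: quat_eq_iff)

lemma qeval_cplx: "qeval q (of_cplx w) = of_cplx (poly q w)"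
  by (simp add: qeval_def of_cplx_pow of_cplx_mult of_cplx_sum poly_altdef)

definition uu :: "complex poly \<Rightarrow> real \<Rightarrow> real \<Rightarrow> complex" where
  "uu q a b = (\<Sum>i\<le>degree q. coeff q i * of_real (Re (Complex a b ^ i)))"
definition vv :: "complex poly \<Rightarrow> real \<Rightarrow> real \<Rightarrow> complex" where
  "vv q a b = (\<Sum>i\<le>degree q. coeff q i * of_real (Im (Complex a b ^ i)))"

lemma qeval_rep:
  assumes "I * I = -1"
  shows "qeval q (qr a + qr b * I) = of_cplx (uu q a b) + of_cplx (vv q a b) * I"
  unfolding qeval_def sum_eval[OF assms] uu_def vv_def
  by (simp add: ofc_qr of_cplx_sum)

lemma poly_uv: "poly q (Complex a b) = uu q a b + vv q a b * \<i>"
  "poly q (cnj (Complex a b)) = uu q a b - vv q a b * \<i>"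
proof -
  have "of_cplx (poly q (Complex a b)) = qeval q (of_cplx (Complex a b))" by (simp add: qeval_cplx)
  also have "of_cplx (Complex a b) = qr a + qr b * ci" using ofc_rep[of "Complex a b"] by simp
  also have "qeval q (qr a + qr b * ci) = of_cplx (uu q a b + vv q a b * \<i>)"
    using qeval_rep[OF ci_sq, of q a b] by (simp add: ci_ofc of_cplx_mult of_cplx_add)
  finally have "of_cplx (poly q (Complex a b)) = of_cplx (uu q a b + vv q a b * \<i>)" .
  then show "poly q (Complex a b) = uu q a b + vv q a b * \<i>" by (simp add: of_cplx_inj)
  have "of_cplx (poly q (cnj (Complex a b))) = qeval q (of_cplx (cnj (Complex a b)))" by (simp add: qeval_cplx)
  also have "of_cplx (cnj (Complex a b)) = qr a + qr b * (-ci)" using ofc_rep_cnj[of "Complex a b"] by simp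
  also have "qeval q (qr a + qr b * (-ci)) = of_cplx (uu q a b - vv q a b * \<i>)"
    using qeval_rep[OF nci_sq, of q a b] by (simp add: quat_eq_iff)
  finally have "of_cplx (poly q (cnj (Complex a b))) = of_cplx (uu q a b - vv q a b * \<i>)" .
  then show "poly q (cnj (Complex a b)) = uu q a b - vv q a b * \<i>" by (simp add: of_cplx_inj)
qed

lemma qeval_zero_iff:
  "qeval q x = 0 \<longleftrightarrow>
    (\<exists>w. x = of_cplx w \<and> poly q w = 0) \<or>
    (\<exists>z. poly q z = 0 \<and> poly q (cnj z) = 0 \<and> x \<in> conjclass (of_cplx z))"
proof
  assume "(\<exists>w. x = of_cplx w \<and> poly q w = 0) \<or>
    (\<exists>z. poly q z = 0 \<and> poly q (cnj z) = 0 \<and> x \<in> conjclass (of_cplx z))"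
  then show "qeval q x = 0"
  proof
    assume "\<exists>w. x = of_cplx w \<and> poly q w = 0"
    then show ?thesis by (auto simp: qeval_cplx of_cplx_0)
  next
    assume "\<exists>z. poly q z = 0 \<and> poly q (cnj z) = 0 \<and> x \<in> conjclass (of_cplx z)"
    then obtain z I where z: "poly q z = 0" "poly q (cnj z) = 0" "I * I = -1"
      "x = qr (Re z) + qr (Im z) * I"
      using conjclass_rep by blast
    have zz: "z = Complex (Re z) (Im z)" by simp
    have "uu q (Re z) (Im z) + vv q (Re z) (Im z) * \<i> = 0"
         "uu q (Re z) (Im z) - vv q (Re z) (Im z) * \<i> = 0"
      using z(1,2) poly_uv[of q "Re z" "Im z"] by (simp_all only: zz[symmetric])
    then have "uu q (Re z) (Im z) = 0" "vv q (Re z) (Im z) = 0"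
      by (auto simp: algebra_simps)
    then show ?thesis using z(3,4) qeval_rep[OF z(3)] by (simp add: of_cplx_0)
  qed
next
  assume Z: "qeval q x = 0"
  obtain a b where ab: "qI x = Quat (\<i> * of_real a) b" "a\<^sup>2 + (cmod b)\<^sup>2 = 1"
    using qI_unit by blast
  let ?w = "Complex (qa x) (qb x)"
  let ?u = "uu q (qa x) (qb x)" and ?v = "vv q (qa x) (qb x)"
  have "of_cplx ?u + of_cplx ?v * qI x = 0"
    using Z qeval_rep[OF qI_sq, of q "qa x" "qb x" x] qrep[of x] by simp
  then have e1: "?u + ?v * \<i> * of_real a = 0" and e2: "?v * b = 0"
    unfolding ab by (simp_all add: quat_eq_iff mult.assoc)
  show "(\<exists>w. x = of_cplx w \<and> poly q w = 0) \<or>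
    (\<exists>z. poly q z = 0 \<and> poly q (cnj z) = 0 \<and> x \<in> conjclass (of_cplx z))"
  proof (cases "?v = 0")
    case True
    then have "?u = 0" using e1 by simp
    then have "poly q ?w = 0" "poly q (cnj ?w) = 0" using True poly_uv by simp_all
    moreover have "x \<in> conjclass (of_cplx ?w)"
      using in_conjclass_I[OF ab(2), of ?w] qrep[of x] ab(1) by simp
    ultimately show ?thesis by blast
  next
    case False
    then have "b = 0" using e2 by simp
    then have "a = 1 \<or> a = -1" using ab(2) by (simp add: power2_eq_1_iff)
    then show ?thesis
    proof
      assume "a = 1"
      then have "x = of_cplx ?w" "poly q ?w = 0"
        using qrep[of x] ab(1) \<open>b = 0\<close> e1 poly_uv(1)[of q "qa x" "qb x"]
        by (simp_all add: ofc_rep ci_def)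
      then show ?thesis by blast
    next
      assume "a = -1"
      then have "x = of_cplx (cnj ?w)" "poly q (cnj ?w) = 0"
        using qrep[of x] ab(1) \<open>b = 0\<close> e1 poly_uv(2)[of q "qa x" "qb x"]
        by (simp_all add: ofc_rep_cnj ci_def quat_eq_iff)
      then show ?thesis by blast
    qed
  qed
qed

lemma partB:
  assumes eta: "\<forall>z\<in>set eta. poly q (cnj z) \<noteq> 0"
    and R: "{z. poly q z = 0} = of_real ` set xi \<union> set eta \<union> set zeta \<union> cnj ` set zeta"
  shows "{x. qeval q x = 0} = (of_cplx \<circ> of_real) ` set xi \<union> of_cplx ` set eta
             \<union> (\<Union>z\<in>set zeta. conjclass (of_cplx z))"
proof -
  have root: "poly q w = 0 \<longleftrightarrow> w \<in> of_real ` set xi \<union> set eta \<union> set zeta \<union> cnj ` set zeta" for w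
    using R by blast
  let ?RHS = "(of_cplx \<circ> of_real) ` set xi \<union> of_cplx ` set eta \<union> (\<Union>z\<in>set zeta. conjclass (of_cplx z))"
  show ?thesis
  proof (intro equalityI subsetI)
    fix x assume "x \<in> {x. qeval q x = 0}"
    then consider (c) w where "x = of_cplx w" "poly q w = 0"
      | (s) z where "poly q z = 0" "poly q (cnj z) = 0" "x \<in> conjclass (of_cplx z)"
      using qeval_zero_iff by blast
    then show "x \<in> ?RHS"
    proof cases
      case c
      from c(2)[unfolded root] show ?thesis
      proof (elim UnE)
        assume "w \<in> of_real ` set xi" then obtain r where "r \<in> set xi" "w = of_real r" by blast
        then show ?thesis using c(1) by auto
      next
        assume "w \<in> set eta" then show ?thesis using c(1) by blast
      next
        assume "w \<in> set zeta" then show ?thesis using c(1) self_conjclass by blast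
      next
        assume "w \<in> cnj ` set zeta" then obtain z where "z \<in> set zeta" "w = cnj z" by blast
        then show ?thesis using c(1) cnj_in_conjclass by blast
      qed
    next
      case s
      from s(1)[unfolded root] show ?thesis
      proof (elim UnE)
        assume "z \<in> of_real ` set xi" then obtain r where "r \<in> set xi" "z = of_real r" by blast
        then show ?thesis using s(3) conjclass_real by auto
      next
        assume "z \<in> set eta" then show ?thesis using s(2) eta by blast
      next
        assume "z \<in> set zeta" then show ?thesis using s(3) by blast
      next
        assume "z \<in> cnj ` set zeta" then obtain z' where "z' \<in> set zeta" "z = cnj z'" by blast
        then show ?thesis using s(3) conjclass_cnj by blast
      qed
    qed
  next
    fix x assume "x \<in> ?RHS"
    then show "x \<in> {x. qeval q x = 0}"
    proof (elim UnE)
      assume "x \<in> (of_cplx \<circ> of_real) ` set xi"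
      then obtain r where r: "r \<in> set xi" "x = of_cplx (of_real r)" by auto
      then have "poly q (of_real r) = 0" using root by blast
      then show ?thesis using r(2) by (simp add: qeval_cplx of_cplx_0)
    next
      assume "x \<in> of_cplx ` set eta"
      then obtain e where e: "e \<in> set eta" "x = of_cplx e" by blast
      then have "poly q e = 0" using root by blast
      then show ?thesis using e(2) by (simp add: qeval_cplx of_cplx_0)
    next
      assume "x \<in> (\<Union>z\<in>set zeta. conjclass (of_cplx z))"
      then obtain z where z: "z \<in> set zeta" "x \<in> conjclass (of_cplx z)" by blast
      then have "poly q z = 0" "poly q (cnj z) = 0" using root by blast+
      then show ?thesis using z(2) qeval_zero_iff by blast
    qed
  qed
qed

lemma partA:
  assumes "{z. poly q z = 0} = of_real ` set xi \<union> set zeta \<union> cnj ` set zeta"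
  shows "{x. qeval q x = 0} = (of_cplx \<circ> of_real) ` set xi \<union> (\<Union>z\<in>set zeta. conjclass (of_cplx z))"
  using partB[of "[]" q xi zeta] assms by simp



lemma key_identity:
  assumes E: "U + V * Quat (\<i> * of_real a) b = 0" and ab: "a\<^sup>2 + (cmod b)\<^sup>2 = 1"
  shows "qfst (U + V * ci) * cnj (qfst (U + V * (-ci))) + qsnd (U + V * (-ci)) * cnj (qsnd (U + V * ci)) = 0"
proof -
  have h2: "b * cnj b = 1 - complex_of_real a * complex_of_real a"
  proof -
    have e: "b * cnj b = complex_of_real ((cmod b)\<^sup>2)" using complex_norm_square[of b] by simp
    have "complex_of_real (a\<^sup>2) + complex_of_real ((cmod b)\<^sup>2) = 1" using ab by (metis of_real_1 of_real_add)
    then show ?thesis unfolding e[symmetric] by (simp add: power2_eq_square algebra_simps)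
  qed
  obtain u1 u2 v1 v2 where UV: "U = Quat u1 u2" "V = Quat v1 v2" by (meson quat.exhaust)
  have c: "u1 + (v1 * (\<i> * complex_of_real a) - v2 * cnj b) = 0 \<and>
     u2 + (v1 * b - v2 * (\<i> * complex_of_real a)) = 0"
    using E unfolding UV by (simp add: quat_eq_iff)
  have u1: "u1 = - (v1 * (\<i> * of_real a) - v2 * cnj b)" and u2: "u2 = - (v1 * b - v2 * (\<i> * of_real a))"
    using c by (simp_all only: eq_neg_iff_add_eq_0)
  have "qfst (U + V * ci) * cnj (qfst (U + V * (-ci))) + qsnd (U + V * (-ci)) * cnj (qsnd (U + V * ci))
      = (v1 * cnj v1 + v2 * cnj v2) * (b * cnj b - (1 - complex_of_real a * complex_of_real a))"
    unfolding UV by (simp add: u1 u2 algebra_simps)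
  also have "\<dots> = 0" using h2 by simp
  finally show ?thesis .
qed



definition Pq :: "nat \<Rightarrow> (nat \<Rightarrow> quat) \<Rightarrow> real \<Rightarrow> quat \<Rightarrow> quat" where
  "Pq n p d0 x = (\<Sum>i=1..n. p i * x ^ i) + of_cplx (of_real d0)"
definition UU :: "nat \<Rightarrow> (nat \<Rightarrow> quat) \<Rightarrow> real \<Rightarrow> real \<Rightarrow> real \<Rightarrow> quat" where
  "UU n p d0 a b = (\<Sum>i=1..n. p i * qr (Re (Complex a b ^ i))) + qr d0"
definition VV :: "nat \<Rightarrow> (nat \<Rightarrow> quat) \<Rightarrow> real \<Rightarrow> real \<Rightarrow> quat" where
  "VV n p a b = (\<Sum>i=1..n. p i * qr (Im (Complex a b ^ i)))"

lemma P_rep: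
  assumes "I * I = -1"
  shows "Pq n p d0 (qr a + qr b * I) = UU n p d0 a b + VV n p a b * I"
  unfolding Pq_def UU_def VV_def sum_eval[OF assms]
  by (simp add: algebra_simps of_cplx_def qr_def)

lemma poly_F1: "poly (derived_f1 n p d0) z = (\<Sum>i=1..n. qfst (p i) * z ^ i) + of_real d0"
  by (simp add: derived_f1_def poly_sum poly_monom)
lemma poly_F2: "poly (derived_f2 n p) z = (\<Sum>i=1..n. qsnd (p i) * z ^ i)"
  by (simp add: derived_f2_def poly_sum poly_monom)
lemma poly_F1b: "poly (derived_f1bar n p d0) z = cnj (poly (derived_f1 n p d0) (cnj z))"
  by (simp add: derived_f1bar_def poly_F1 poly_sum poly_monom)
lemma poly_F2b: "poly (derived_f2bar n p) z = cnj (poly (derived_f2 n p) (cnj z))"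
  by (simp add: derived_f2bar_def poly_F2 poly_sum poly_monom)

lemma P_cplx: "Pq n p d0 (of_cplx z) = Quat (poly (derived_f1 n p d0) z) (poly (derived_f2 n p) (cnj z))"
  by (simp add: quat_eq_iff Pq_def poly_F1 poly_F2 qfst_sum qsnd_sum of_cplx_pow)

lemma G1: "UU n p d0 a b + VV n p a b * ci =
   Quat (poly (derived_f1 n p d0) (Complex a b)) (poly (derived_f2 n p) (cnj (Complex a b)))"
  using P_rep[OF ci_sq, of n p d0 a b] P_cplx[of n p d0 "Complex a b"] ofc_rep[of "Complex a b"] by simp
lemma G2: "UU n p d0 a b + VV n p a b * (-ci) =
   Quat (poly (derived_f1 n p d0) (cnj (Complex a b))) (poly (derived_f2 n p) (Complex a b))"
  using P_rep[OF nci_sq, of n p d0 a b] P_cplx[of n p d0 "cnj (Complex a b)"] ofc_rep_cnj[of "Complex a b"] by simp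

lemma coeff_F1: "1 \<le> n \<Longrightarrow> coeff (derived_f1 n p d0) n = qfst (p n)"
  by (cases n) (simp_all add: derived_f1_def coeff_sum coeff_monom)
lemma coeff_F2: "1 \<le> n \<Longrightarrow> coeff (derived_f2 n p) n = qsnd (p n)"
  by (simp add: derived_f2_def coeff_sum coeff_monom)

lemma zero_all_reals:
  fixes f :: "complex poly"
  assumes "\<And>r. poly f (of_real r) = 0"
  shows "f = 0"
proof (rule ccontr)
  assume "f \<noteq> 0"
  then have "finite {x. poly f x = 0}" by (rule poly_roots_finite)
  moreover have "range complex_of_real \<subseteq> {x. poly f x = 0}" using assms by auto
  moreover have "infinite (range complex_of_real)"
    using finite_imageD[of complex_of_real UNIV] infinite_UNIV_char_0 by (auto simp: inj_on_def)
  ultimately show False by (meson finite_subset)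
qed



definition Com :: "nat \<Rightarrow> (nat \<Rightarrow> quat) \<Rightarrow> real \<Rightarrow> complex \<Rightarrow> bool" where
  "Com n p d0 c \<longleftrightarrow> poly (derived_f1 n p d0) c = 0 \<and> poly (derived_f2 n p) c = 0 \<and>
     poly (derived_f1bar n p d0) c = 0 \<and> poly (derived_f2bar n p) c = 0"

lemma N_nonzero:
  assumes "1 \<le> n" "p n \<noteq> 0"
  shows "derived_f1 n p d0 * derived_f1bar n p d0 + derived_f2 n p * derived_f2bar n p \<noteq> 0"
proof
  let ?F1 = "derived_f1 n p d0" and ?F2 = "derived_f2 n p"
  assume N0: "?F1 * derived_f1bar n p d0 + ?F2 * derived_f2bar n p = 0"
  have "poly ?F1 (of_real r) = 0 \<and> poly ?F2 (of_real r) = 0" for r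
  proof -
    have "poly ?F1 (of_real r) * cnj (poly ?F1 (of_real r)) + poly ?F2 (of_real r) * cnj (poly ?F2 (of_real r)) = 0"
      using arg_cong[OF N0, of "\<lambda>f. poly f (of_real r)"] by (simp add: poly_F1b poly_F2b)
    then have "complex_of_real ((cmod (poly ?F1 (of_real r)))\<^sup>2 + (cmod (poly ?F2 (of_real r)))\<^sup>2) = 0"
      by (simp only: of_real_add complex_norm_square)
    then have "(cmod (poly ?F1 (of_real r)))\<^sup>2 + (cmod (poly ?F2 (of_real r)))\<^sup>2 = 0"
      by (simp only: of_real_eq_0_iff)
    then show ?thesis by (simp add: add_nonneg_eq_0_iff)
  qed
  then have "?F1 = 0" "?F2 = 0" using zero_all_reals by blast+
  then have "qfst (p n) = 0" "qsnd (p n) = 0"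
    using coeff_F1[OF assms(1), of p d0] coeff_F2[OF assms(1), of p] by simp_all
  then show False using assms(2) by (simp add: quat_eq_iff)
qed

lemma subsingleton_finite: "(\<And>x y. x \<in> S \<Longrightarrow> y \<in> S \<Longrightarrow> x = y) \<Longrightarrow> finite S"
  by (metis finite.simps insertI1 subsetI finite_subset finite_insert singletonD)

lemma finite_if_noCom:
  assumes "1 \<le> n" "p n \<noteq> 0" and noC: "\<not> (\<exists>c. c \<notin> \<real> \<and> Com n p d0 c)"
  shows "finite {x. Pq n p d0 x = 0}"
proof -
  let ?F1 = "derived_f1 n p d0" and ?F2 = "derived_f2 n p"
  let ?N = "?F1 * derived_f1bar n p d0 + ?F2 * derived_f2bar n p"
  let ?Z = "{x. Pq n p d0 x = 0}"
  let ?rp = "\<lambda>x. Complex (qa x) (qb x)"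
  have Zeq: "UU n p d0 (qa x) (qb x) + VV n p (qa x) (qb x) * qI x = 0" if "x \<in> ?Z" for x
    using that P_rep[OF qI_sq, of n p d0 "qa x" "qb x" x] qrep[of x] by simp
  have Nroot: "poly ?N (?rp x) = 0" if "x \<in> ?Z" for x
  proof -
    obtain a b where ab: "qI x = Quat (\<i> * of_real a) b" "a\<^sup>2 + (cmod b)\<^sup>2 = 1"
      using qI_unit by blast
    show ?thesis
      using key_identity[OF Zeq[OF that, unfolded ab(1)] ab(2)]
      unfolding G1 G2 by (simp add: poly_F1b poly_F2b)
  qed
  have sub: "?Z \<subseteq> (\<Union>w\<in>{w. poly ?N w = 0}. {x\<in>?Z. ?rp x = w})"
    using Nroot by blast
  have each: "finite {x\<in>?Z. ?rp x = w}" for w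
  proof (rule subsingleton_finite)
    fix x y assume x: "x \<in> {x\<in>?Z. ?rp x = w}" and y: "y \<in> {x\<in>?Z. ?rp x = w}"
    then have same: "qa x = qa y" "qb x = qb y" by auto
    show "x = y"
    proof (cases "qb x = 0")
      case True
      then show ?thesis using qrep[of x] qrep[of y] same by simp
    next
      case False
      then have pos: "qb x > 0" using qb_nonneg[of x] by simp
      let ?U = "UU n p d0 (qa x) (qb x)" and ?V = "VV n p (qa x) (qb x)"
      have ex: "?U + ?V * qI x = 0" using Zeq x by simp
      have ey: "?U + ?V * qI y = 0" using Zeq[of y] y same by simp
      show ?thesis
      proof (cases "?V = 0")
        case True
        then have "?U = 0" using ex by simp
        then have g1: "?U + ?V * ci = 0" and g2: "?U + ?V * (-ci) = 0" using True by simp_all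
        let ?w = "Complex (qa x) (qb x)"
        have "poly ?F1 ?w = 0" "poly ?F2 (cnj ?w) = 0" using g1 unfolding G1 by (simp_all add: quat_eq_iff)
        moreover have "poly ?F1 (cnj ?w) = 0" "poly ?F2 ?w = 0" using g2 unfolding G2 by (simp_all add: quat_eq_iff)
        ultimately have "Com n p d0 ?w" by (simp add: Com_def poly_F1b poly_F2b)
        moreover have "?w \<notin> \<real>" using pos by (simp add: complex_is_Real_iff)
        ultimately show ?thesis using noC by blast
      next
        case False
        have a: "?V * qI x = - ?U" using ex by (metis add.commute eq_neg_iff_add_eq_0)
        have b: "?V * qI y = - ?U" using ey by (metis add.commute eq_neg_iff_add_eq_0)
        have "?V * (qI x - qI y) = 0" by (simp add: right_diff_distrib a b)
        then have "qI x = qI y" using False by simp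
        then show ?thesis using qrep[of x] qrep[of y] same by metis
      qed
    qed
  qed
  have "?N \<noteq> 0" using N_nonzero[of n p d0] assms(1,2) by blast
  then have "finite {w. poly ?N w = 0}" by (rule poly_roots_finite)
  then show ?thesis using sub each by (meson finite_UN_I finite_subset)
qed

lemma unit_ab: "((1 - x\<^sup>2) / (1 + x\<^sup>2))\<^sup>2 + (cmod (complex_of_real (2 * x / (1 + x\<^sup>2))))\<^sup>2 = (1::real)"
proof -
  have nz: "(1 + x\<^sup>2)\<^sup>2 \<noteq> 0" by (metis add_pos_nonneg zero_less_one zero_le_power2 less_irrefl power_not_zero)
  have e: "(1-x\<^sup>2)\<^sup>2 + (2*x)\<^sup>2 = (1+x\<^sup>2)\<^sup>2" by (simp add: power2_eq_square algebra_simps)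
  have "((1 - x\<^sup>2) / (1 + x\<^sup>2))\<^sup>2 + (2 * x / (1 + x\<^sup>2))\<^sup>2 = 1"
    unfolding power_divide add_divide_distrib[symmetric] e using nz by simp
  then show ?thesis by (simp only: norm_of_real power2_abs)
qed

lemma ak_alt: "(1 - x\<^sup>2) / (1 + x\<^sup>2) = 2 / (1 + x\<^sup>2) - (1::real)"
proof -
  have "1 + x\<^sup>2 \<noteq> 0" by (metis add_pos_nonneg zero_less_one zero_le_power2 less_irrefl)
  then show ?thesis by (simp add: field_simps)
qed

lemma kk: "2 / (1 + (real k)\<^sup>2) = 2 / (1 + (real m)\<^sup>2) \<Longrightarrow> k = m"
proof -
  assume "2 / (1 + (real k)\<^sup>2) = 2 / (1 + (real m)\<^sup>2)"
  then have "(real k)\<^sup>2 = (real m)\<^sup>2" by (simp add: divide_cancel_left)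
  then show "k = m" by (simp add: power2_eq_iff_nonneg)
qed

lemma infinite_if_Com:
  assumes "c \<notin> \<real>" "Com n p d0 c"
  shows "infinite {x. Pq n p d0 x = 0}"
proof -
  let ?a = "Re c" and ?b = "Im c"
  have cc: "c = Complex ?a ?b" by simp
  let ?U = "UU n p d0 ?a ?b" and ?V = "VV n p ?a ?b"
  have c4: "poly (derived_f1 n p d0) c = 0" "poly (derived_f2 n p) c = 0"
    "poly (derived_f1 n p d0) (cnj c) = 0" "poly (derived_f2 n p) (cnj c) = 0"
    using assms(2) by (simp_all add: Com_def poly_F1b poly_F2b)
  have g1: "?U + ?V * ci = 0" using G1[of n p d0 ?a ?b] c4 by (simp add: quat_eq_iff)
  have g2: "?U + ?V * (-ci) = 0" using G2[of n p d0 ?a ?b] c4 by (simp add: quat_eq_iff)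
  have ua: "?U = - (?V * ci)" using g1 by (simp add: eq_neg_iff_add_eq_0)
  have ub: "?U = ?V * ci" using g2 by (metis add_uminus_conv_diff eq_iff_diff_eq_0 mult_minus_right)
  have "?V * ci = - (?V * ci)" using ua ub by simp
  then have vc: "?V * ci = 0" by (simp add: quat_eq_iff)
  then have U0: "?U = 0" using ub by simp
  have "ci \<noteq> 0" by (simp add: quat_eq_iff)
  then have V0: "?V = 0" using vc by simp
  define ak :: "nat \<Rightarrow> real" where "ak k = (1 - (real k)\<^sup>2) / (1 + (real k)\<^sup>2)" for k
  define bk :: "nat \<Rightarrow> real" where "bk k = 2 * real k / (1 + (real k)\<^sup>2)" for k
  define xk where "xk k = qr ?a + qr ?b * Quat (\<i> * of_real (ak k)) (of_real (bk k))" for k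
  have unit: "(ak k)\<^sup>2 + (cmod (of_real (bk k)))\<^sup>2 = 1" for k
    unfolding ak_def bk_def by (rule unit_ab)
  have inZ: "xk k \<in> {x. Pq n p d0 x = 0}" for k
    unfolding xk_def using P_rep[OF unit_sq[OF unit[of k]], of n p d0 ?a ?b] U0 V0 by simp
  have "inj xk"
  proof
    fix k m assume "xk k = xk m"
    then have "Im (qfst (xk k)) = Im (qfst (xk m))" by simp
    then have "?b * ak k = ?b * ak m" unfolding xk_def by simp
    then have "ak k = ak m" using assms(1) by (simp add: complex_is_Real_iff)
    then have "2 / (1 + (real k)\<^sup>2) = 2 / (1 + (real m)\<^sup>2)"
      unfolding ak_def ak_alt by simp
    then show "k = m" by (rule kk)
  qed
  then have "infinite (range xk)" by (rule range_inj_infinite)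
  moreover have "range xk \<subseteq> {x. Pq n p d0 x = 0}" using inZ by blast
  ultimately show ?thesis using finite_subset by blast
qed

lemma finite_iff_Com:
  assumes "1 \<le> n" "p n \<noteq> 0"
  shows "finite {x. Pq n p d0 x = 0} \<longleftrightarrow> \<not> (\<exists>c. c \<notin> \<real> \<and> Com n p d0 c)"
  using finite_if_noCom[of n p d0] infinite_if_Com assms by blast



theorem corollary3:
  shows
   "(\<forall>(q::complex poly) (xi::real list) (zeta::complex list).
       q \<noteq> 0 \<and> (\<forall>i. coeff q i \<in> \<real>) \<and>
       distinct xi \<and> distinct (zeta @ map cnj zeta) \<and> (\<forall>z\<in>set zeta. z \<notin> \<real>) \<and>
       {z. poly q z = 0} = of_real ` set xi \<union> set zeta \<union> cnj ` set zeta
     \<longrightarrow> {x. qeval q x = 0} =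
           (of_cplx \<circ> of_real) ` set xi \<union> (\<Union>z\<in>set zeta. conjclass (of_cplx z)))
  \<and> (\<forall>(q::complex poly) (xi::real list) (eta::complex list) (zeta::complex list).
       q \<noteq> 0 \<and>
       distinct xi \<and> distinct (eta @ zeta @ map cnj zeta) \<and>
       (\<forall>z\<in>set eta \<union> set zeta. z \<notin> \<real>) \<and>
       (\<forall>z\<in>set eta. poly q (cnj z) \<noteq> 0) \<and>
       {z. poly q z = 0} = of_real ` set xi \<union> set eta \<union> set zeta \<union> cnj ` set zeta
     \<longrightarrow> {x. qeval q x = 0} =
           (of_cplx \<circ> of_real) ` set xi \<union> of_cplx ` set eta
             \<union> (\<Union>z\<in>set zeta. conjclass (of_cplx z)))
  \<and> (\<forall>(n::nat) (p::nat \<Rightarrow> quat) (d0::real).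
       1 \<le> n \<and> p n \<noteq> 0 \<and> d0 \<in> {0, 1} \<longrightarrow>
       (finite {x::quat. (\<Sum>i=1..n. p i * x ^ i) + of_cplx (of_real d0) = 0}
          \<longleftrightarrow> \<not> (\<exists>c. c \<notin> \<real> \<and>
                 poly (gcd (gcd (derived_f1 n p d0) (derived_f2 n p))
                           (gcd (derived_f1bar n p d0) (derived_f2bar n p))) c = 0))
       \<and> (finite {x::quat. (\<Sum>i=1..n. p i * x ^ i) + of_cplx (of_real d0) = 0}
          \<longleftrightarrow> \<not> (\<exists>c. c \<notin> \<real> \<and>
                 poly (gcd (derived_f1 n p d0) (derived_f2 n p)) c = 0 \<and>
                 poly (gcd (derived_f1 n p d0) (derived_f2 n p)) (cnj c) = 0)))"
  proof (intro conjI allI impI)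
  fix q :: "complex poly" and xi :: "real list" and zeta :: "complex list"
  assume "q \<noteq> 0 \<and> (\<forall>i. coeff q i \<in> \<real>) \<and>
       distinct xi \<and> distinct (zeta @ map cnj zeta) \<and> (\<forall>z\<in>set zeta. z \<notin> \<real>) \<and>
       {z. poly q z = 0} = of_real ` set xi \<union> set zeta \<union> cnj ` set zeta"
  then show "{x. qeval q x = 0} =
           (of_cplx \<circ> of_real) ` set xi \<union> (\<Union>z\<in>set zeta. conjclass (of_cplx z))"
    by (elim conjE) (rule partA)
next
  fix q :: "complex poly" and xi :: "real list" and eta zeta :: "complex list"
  assume "q \<noteq> 0 \<and>
       distinct xi \<and> distinct (eta @ zeta @ map cnj zeta) \<and>
       (\<forall>z\<in>set eta \<union> set zeta. z \<notin> \<real>) \<and>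
       (\<forall>z\<in>set eta. poly q (cnj z) \<noteq> 0) \<and>
       {z. poly q z = 0} = of_real ` set xi \<union> set eta \<union> set zeta \<union> cnj ` set zeta"
  then show "{x. qeval q x = 0} =
           (of_cplx \<circ> of_real) ` set xi \<union> of_cplx ` set eta
             \<union> (\<Union>z\<in>set zeta. conjclass (of_cplx z))"
    by (elim conjE) (rule partB)
next
  fix n :: nat and p :: "nat \<Rightarrow> quat" and d0 :: real
  assume H: "1 \<le> n \<and> p n \<noteq> 0 \<and> d0 \<in> {0, 1}"
  have gcdroot: "poly (gcd f g) c = 0 \<longleftrightarrow> poly f c = 0 \<and> poly g c = 0" for f g :: "complex poly" and c
    by (simp add: poly_eq_0_iff_dvd)
  have Zeq: "{x::quat. (\<Sum>i=1..n. p i * x ^ i) + of_cplx (of_real d0) = 0} = {x. Pq n p d0 x = 0}"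
    by (simp add: Pq_def)
  have fin: "finite {x. Pq n p d0 x = 0} \<longleftrightarrow> \<not> (\<exists>c. c \<notin> \<real> \<and> Com n p d0 c)"
    using finite_iff_Com H by blast
  show "finite {x::quat. (\<Sum>i=1..n. p i * x ^ i) + of_cplx (of_real d0) = 0}
          \<longleftrightarrow> \<not> (\<exists>c. c \<notin> \<real> \<and>
                 poly (gcd (gcd (derived_f1 n p d0) (derived_f2 n p))
                           (gcd (derived_f1bar n p d0) (derived_f2bar n p))) c = 0)"
    unfolding Zeq fin by (simp add: gcdroot Com_def conj_assoc)
  show "finite {x::quat. (\<Sum>i=1..n. p i * x ^ i) + of_cplx (of_real d0) = 0}
          \<longleftrightarrow> \<not> (\<exists>c. c \<notin> \<real> \<and>
                 poly (gcd (derived_f1 n p d0) (derived_f2 n p)) c = 0 \<and>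
                 poly (gcd (derived_f1 n p d0) (derived_f2 n p)) (cnj c) = 0)"
    unfolding Zeq fin by (simp add: gcdroot Com_def poly_F1b poly_F2b conj_assoc)
qed

end
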